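(* The $\mathcal{C}$-submodules $\mathcal{C} \langle A \rangle$ and $\widehat{\mathfrak{H}^{0}}$ of $\mathfrak{H}$ are closed under the shuffle product $\mathrm{sh}_{\hbar}$. For any $u_{1}, \ldots , u_{r}, v_{1}, \ldots , v_{s} \in \mathfrak{z}$ and $M \ge 1$, \[ Z_{q, M}(u_{1} \cdots u_{r} \,\mathrm{sh}_{\hbar}\, v_{1} \cdots v_{s})= \sum_{\substack{0<m_{1}<\cdots <m_{r} \\ 0<n_{1}<\cdots <n_{s} \\ m_{r}+n_{s}<M}} \prod_{i=1}^{r}F_{q}(m_{i}; u_{i})\prod_{j=1}^{s}F_{q}(n_{j}; v_{j}) \] (with $m_r$, resp. $n_s$, read as $0$ if $r=0$, resp. $s=0$). Consequently $Z_{q}(w \,\mathrm{sh}_{\hbar}\, w')=Z_{q}(w)Z_{q}(w')$ for any $w, w' \in \widehat{\mathfrak{H}^{0}}$.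
   Context: Let $\mathcal{C}=\mathbb{Q}[\hbar]$ ($\hbar$ formal), $\mathfrak{H}=\mathcal{C}\langle a,b\rangle$ the non-commutative polynomial ring. For $k\ge1$ put $g_k=ba^k$. Let $A=\{\hbar b\}\cup\{ba^k\mid k\ge1\}$, $\mathcal{C}\langle A\rangle$ the $\mathcal{C}$-subalgebra of $\mathfrak H$ generated by $1$ and $A$, $\mathfrak z$ the $\mathcal C$-span of $A$, $\widehat{\mathfrak H^0}=\mathcal C+\sum_{k\ge1}\mathcal C\langle A\rangle g_k$. Fix $q\in\mathbb{C}$, $0<|q|<1$; $\mathbb{C}$ is a $\mathcal{C}$-module with $\hbar$ acting by $1-q$; $[m]=(1-q^m)/(1-q)$; for $m\ge1$, $F_q(m;\cdot):\mathfrak{z}\to\mathbb{C}$ is $\mathcal{C}$-linear with $F_q(m;\hbar b)=1-q$, $F_q(m;g_k)=q^{km}/[m]^k$. For $M\ge1$, $Z_{q,M}:\mathcal C\langle A\rangle\to\mathbb C$ is the $\mathcal{C}$-linear map with $Z_{q,M}(1)=1$ and $Z_{q,M}(u_1\cdots u_r)=\sum_{0<m_1<\cdots<m_r<M}\prod_i F_q(m_i;u_i)$ for $u_i\in A$ (hence by multilinearity also for $u_i\in\mathfrak z$); $Z_q(w)=\lim_{M\to\infty}Z_{q,M}(w)$ for $w\in\widehat{\mathfrak H^0}$ (the limit exists). The shuffle product $\mathrm{sh}_\hbar$ on $\mathfrak H$ (written infix) is the $\mathcal C$-bilinear product determined by $w\,\mathrm{sh}_\hbar\,1=1\,\mathrm{sh}_\hbar\,w=w$,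 $wa\,\mathrm{sh}_\hbar\,w'a=(wa\,\mathrm{sh}_\hbar\,w'+w\,\mathrm{sh}_\hbar\,w'a+\hbar(w\,\mathrm{sh}_\hbar\,w'))a$, $wb\,\mathrm{sh}_\hbar\,w'=w\,\mathrm{sh}_\hbar\,w'b=(w\,\mathrm{sh}_\hbar\,w')b$ for all $w,w'\in\mathfrak H$. *)

theory Defs
  imports Complex_Main "HOL-Library.Poly_Mapping" "HOL-Computational_Algebra.Polynomial"
begin

datatype letter = La | Lb

type_synonym word = "letter list"
type_synonym H = "word \<Rightarrow>\<^sub>0 rat poly"

definition hbar :: "rat poly" where "hbar = [:0, 1:]"

definition scal :: "rat poly \<Rightarrow> H \<Rightarrow> H" where
  "scal c f = Poly_Mapping.map (\<lambda>x. c * x) f"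

definition mapkeys :: "(word \<Rightarrow> word) \<Rightarrow> H \<Rightarrow> H" where
  "mapkeys g f = (\<Sum>v\<in>Poly_Mapping.keys f. Poly_Mapping.single (g v) (Poly_Mapping.lookup f v))"

definition oneH :: H where "oneH = Poly_Mapping.single [] 1"

definition cat :: "H \<Rightarrow> H \<Rightarrow> H" where
  "cat f g = (\<Sum>v\<in>Poly_Mapping.keys f. \<Sum>v'\<in>Poly_Mapping.keys g. Poly_Mapping.single (v @ v') (Poly_Mapping.lookup f v * Poly_Mapping.lookup g v'))"

definition prodH :: "H list \<Rightarrow> H" where
  "prodH us = foldr cat us oneH"

text \<open>Shuffle product on words, computed on reversed words (head = last letter).\<close>
fun shr :: "word \<Rightarrow> word \<Rightarrow> H" where
  "shr [] y = Poly_Mapping.single y 1"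
| "shr x [] = Poly_Mapping.single x 1"
| "shr (Lb # x) y = mapkeys (Cons Lb) (shr x y)"
| "shr (La # x) (Lb # y) = mapkeys (Cons Lb) (shr (La # x) y)"
| "shr (La # x) (La # y) =
     mapkeys (Cons La) (shr (La # x) y + shr x (La # y) + scal hbar (shr x y))"

definition shw :: "word \<Rightarrow> word \<Rightarrow> H" where
  "shw v v' = mapkeys rev (shr (rev v) (rev v'))"

definition sh :: "H \<Rightarrow> H \<Rightarrow> H" where
  "sh f g = (\<Sum>v\<in>Poly_Mapping.keys f. \<Sum>v'\<in>Poly_Mapping.keys g. scal (Poly_Mapping.lookup f v * Poly_Mapping.lookup g v') (shw v v'))"

definition gen :: "nat \<Rightarrow> H" where
  "gen k = Poly_Mapping.single (Lb # replicate k La) 1"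

definition hb :: H where "hb = Poly_Mapping.single [Lb] hbar"

definition Aset :: "H set" where
  "Aset = {hb} \<union> {gen k | k. k \<ge> 1}"

inductive_set zspace :: "H set" where
  z_zero: "0 \<in> zspace"
| z_step: "a \<in> Aset \<Longrightarrow> f \<in> zspace \<Longrightarrow> scal c a + f \<in> zspace"

inductive_set CA :: "H set" where
  CA_one: "oneH \<in> CA"
| CA_gen: "a \<in> Aset \<Longrightarrow> a \<in> CA"
| CA_add: "f \<in> CA \<Longrightarrow> g \<in> CA \<Longrightarrow> f + g \<in> CA"
| CA_scal: "f \<in> CA \<Longrightarrow> scal c f \<in> CA"
| CA_mult: "f \<in> CA \<Longrightarrow> g \<in> CA \<Longrightarrow> cat f g \<in> CA"

inductive_set H0hat :: "H set" where
  H0_const: "scal c oneH \<in> H0hat"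
| H0_gk: "f \<in> CA \<Longrightarrow> k \<ge> 1 \<Longrightarrow> cat f (gen k) \<in> H0hat"
| H0_add: "f \<in> H0hat \<Longrightarrow> g \<in> H0hat \<Longrightarrow> f + g \<in> H0hat"

definition evC :: "complex \<Rightarrow> rat poly \<Rightarrow> complex" where
  "evC q c = poly (map_poly of_rat c) (1 - q)"

definition qint :: "complex \<Rightarrow> nat \<Rightarrow> complex" where
  "qint q m = (1 - q ^ m) / (1 - q)"

text \<open>Value attached to the block b a^k at index m. For k >= 1 this is F_q(m; g_k);
  for k = 0 (the word b) it is 1, so that hb = hbar * b gets the value (1 - q).\<close>
definition G :: "complex \<Rightarrow> nat \<Rightarrow> nat \<Rightarrow> complex" where
  "G q m k = (if k = 0 then 1 else q ^ (k * m) / (qint q m) ^ k)"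

text \<open>Decomposition of a word as b a^k1 ... b a^kr.\<close>
function blocks :: "word \<Rightarrow> nat list option" where
  "blocks [] = Some []"
| "blocks (La # w) = None"
| "blocks (Lb # w) = map_option (Cons (length (takeWhile (\<lambda>c. c = La) w)))
                        (blocks (dropWhile (\<lambda>c. c = La) w))"
  by pat_completeness auto
termination
  by (relation "measure length") (auto simp: le_imp_less_Suc length_dropWhile_le)

definition Fw :: "complex \<Rightarrow> nat \<Rightarrow> word \<Rightarrow> complex" where
  "Fw q m w = (case blocks w of Some [k] \<Rightarrow> G q m k | _ \<Rightarrow> 0)"

text \<open>F_q(m; -) extended C-linearly (agrees with the paper on z).\<close>
definition F :: "complex \<Rightarrow> nat \<Rightarrow> H \<Rightarrow> complex" where
  "F q m f = (\<Sum>w\<in>Poly_Mapping.keys f. evC q (Poly_Mapping.lookup f w) * Fw q m w)"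

definition incseqs :: "nat \<Rightarrow> nat \<Rightarrow> nat list set" where
  "incseqs r M = {ms. length ms = r \<and> sorted_wrt (<) ms \<and> set ms \<subseteq> {0<..<M}}"

definition Zw :: "complex \<Rightarrow> nat \<Rightarrow> word \<Rightarrow> complex" where
  "Zw q M w = (case blocks w of None \<Rightarrow> 0
     | Some ks \<Rightarrow> (\<Sum>ms\<in>incseqs (length ks) M. \<Prod>i<length ks. G q (ms ! i) (ks ! i)))"

text \<open>Z_{q,M}, extended C-linearly (agrees with the paper on C<A>).\<close>
definition Z :: "complex \<Rightarrow> nat \<Rightarrow> H \<Rightarrow> complex" where
  "Z q M f = (\<Sum>w\<in>Poly_Mapping.keys f. evC q (Poly_Mapping.lookup f w) * Zw q M w)"

definition Zq :: "complex \<Rightarrow> H \<Rightarrow> complex" where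
  "Zq q f = lim (\<lambda>M. Z q M f)"

definition lastz :: "nat list \<Rightarrow> nat" where
  "lastz xs = (if xs = [] then 0 else last xs)"

end

theory Submission
  imports Defs
begin

abbreviation lk :: "H \<Rightarrow> word \<Rightarrow> rat poly" where "lk \<equiv> Poly_Mapping.lookup"
abbreviation kys :: "H \<Rightarrow> word set" where "kys \<equiv> Poly_Mapping.keys"

lemma map_poly_of_rat_add: "map_poly (of_rat :: rat \<Rightarrow> complex) (a + b) = map_poly of_rat a + map_poly of_rat b"
  by (rule poly_eqI) (simp add: coeff_map_poly of_rat_add)

lemma map_poly_of_rat_mult: "map_poly (of_rat :: rat \<Rightarrow> complex) (a * b) = map_poly of_rat a * map_poly of_rat b"
  by (rule poly_eqI) (simp add: coeff_map_poly coeff_mult of_rat_mult of_rat_sum)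

lemma evC_add [simp]: "evC q (a + b) = evC q a + evC q b"
  by (simp add: evC_def map_poly_of_rat_add)

lemma evC_mult [simp]: "evC q (a * b) = evC q a * evC q b"
  by (simp add: evC_def map_poly_of_rat_mult)

lemma evC_0 [simp]: "evC q 0 = 0" by (simp add: evC_def)
lemma evC_1 [simp]: "evC q 1 = 1" by (simp add: evC_def)
lemma evC_hbar [simp]: "evC q hbar = 1 - q"
  unfolding evC_def hbar_def by (simp add: map_poly_pCons)

lemma evC_sum: "evC q (\<Sum>i\<in>I. f i) = (\<Sum>i\<in>I. evC q (f i))"
  by (induction I rule: infinite_finite_induct) auto

lemma lookup_scal [simp]: "lk (scal c f) w = c * lk f w"
  unfolding scal_def by (simp add: Poly_Mapping.map.rep_eq when_def)

lemma keys_scal: "kys (scal c f) \<subseteq> kys f"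
  by (auto simp: in_keys_iff)

lemma scal_0 [simp]: "scal 0 f = 0"
  by (rule poly_mapping_eqI) simp

lemma scal_zero [simp]: "scal c 0 = 0"
  by (rule poly_mapping_eqI) simp

lemma scal_scal: "scal c (scal d f) = scal (c * d) f"
  by (rule poly_mapping_eqI) (simp add: mult.assoc)

lemma scal_add: "scal c (f + g) = scal c f + scal c g"
  by (rule poly_mapping_eqI) (simp add: lookup_add algebra_simps)

lemma lookup_single_if: "lk (Poly_Mapping.single k v) k' = (if k = k' then v else 0)"
  by (simp add: lookup_single when_def)

lemma lookup_mapkeys: "lk (mapkeys g f) u = (\<Sum>v\<in>kys f. if g v = u then lk f v else 0)"
  unfolding mapkeys_def by (simp add: lookup_sum lookup_single_if)

lemma lookup_mapkeys_inj:
  assumes "inj g"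
  shows "lk (mapkeys g f) (g v) = lk f v"
proof -
  have "lk (mapkeys g f) (g v) = (\<Sum>v'\<in>kys f. if v' = v then lk f v' else 0)"
    unfolding lookup_mapkeys using assms by (intro sum.cong) (auto dest: injD)
  also have "\<dots> = lk f v"
    by (cases "v \<in> kys f") (auto simp: in_keys_iff)
  finally show ?thesis .
qed

lemma lookup_mapkeys_notin:
  assumes "u \<notin> range g"
  shows "lk (mapkeys g f) u = 0"
  unfolding lookup_mapkeys using assms by (intro sum.neutral) auto

lemma lookup_mapkeys_Cons:
  "lk (mapkeys (Cons c) f) u = (case u of [] \<Rightarrow> 0 | d # w \<Rightarrow> if d = c then lk f w else 0)"
proof (cases u)
  case Nil then show ?thesis by (simp, intro lookup_mapkeys_notin, auto)
next
  case (Cons d w)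
  show ?thesis
  proof (cases "d = c")
    case True then show ?thesis using Cons by (simp add: lookup_mapkeys_inj)
  next
    case False then show ?thesis using Cons by (subst lookup_mapkeys_notin) auto
  qed
qed

lemma lookup_mapkeys_rev: "lk (mapkeys rev f) u = lk f (rev u)"
  using lookup_mapkeys_inj[of rev f "rev u"] by (simp add: inj_on_def)

lemma lookup_cat: "lk (cat f g) w =
   (\<Sum>v\<in>kys f. \<Sum>v'\<in>kys g. if v @ v' = w then lk f v * lk g v' else 0)"
  unfolding cat_def by (simp add: lookup_sum lookup_single_if)

lemma lookup_sh: "lk (sh f g) w =
   (\<Sum>v\<in>kys f. \<Sum>v'\<in>kys g. lk f v * lk g v' * lk (shw v v') w)"
  unfolding sh_def by (simp add: lookup_sum)

definition lin :: "complex \<Rightarrow> (word \<Rightarrow> complex) \<Rightarrow> H \<Rightarrow> complex" where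
  "lin q e h = (\<Sum>w\<in>kys h. evC q (lk h w) * e w)"

lemma Z_lin: "Z q M h = lin q (Zw q M) h" by (simp add: Z_def lin_def)
lemma F_lin: "F q m h = lin q (Fw q m) h" by (simp add: F_def lin_def)

lemma lin_superset:
  assumes "finite S" "kys h \<subseteq> S"
  shows "lin q e h = (\<Sum>w\<in>S. evC q (lk h w) * e w)"
  unfolding lin_def using assms by (intro sum.mono_neutral_left) (auto simp: in_keys_iff)

lemma lin_add: "lin q e (f + g) = lin q e f + lin q e g"
proof -
  let ?S = "kys f \<union> kys g"
  have "lin q e (f + g) = (\<Sum>w\<in>?S. evC q (lk (f+g) w) * e w)"
    by (rule lin_superset) (auto dest: set_mp[OF keys_add])
  also have "\<dots> = (\<Sum>w\<in>?S. evC q (lk f w) * e w) + (\<Sum>w\<in>?S. evC q (lk g w) * e w)"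
    by (simp add: lookup_add algebra_simps sum.distrib)
  also have "\<dots> = lin q e f + lin q e g"
    by (subst (1 2) lin_superset[of ?S]) auto
  finally show ?thesis .
qed

lemma lin_zero [simp]: "lin q e 0 = 0" by (simp add: lin_def)

lemma lin_single [simp]: "lin q e (Poly_Mapping.single w c) = evC q c * e w"
  by (simp add: lin_def)

lemma lin_sum: "lin q e (\<Sum>i\<in>I. f i) = (\<Sum>i\<in>I. lin q e (f i))"
  by (induction I rule: infinite_finite_induct) (auto simp: lin_add)

lemma lin_scal: "lin q e (scal c f) = evC q c * lin q e f"
proof -
  have "lin q e (scal c f) = (\<Sum>w\<in>kys f. evC q (lk (scal c f) w) * e w)"
    by (rule lin_superset) (auto simp: keys_scal[THEN subsetD])
  then show ?thesis by (simp add: lin_def sum_distrib_left algebra_simps)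
qed

lemma lin_cong: "(\<And>w. w \<in> kys h \<Longrightarrow> e w = e' w) \<Longrightarrow> lin q e h = lin q e' h"
  by (simp add: lin_def)

lemma lin_mapkeys: "lin q e (mapkeys g f) = lin q (\<lambda>w. e (g w)) f"
  unfolding mapkeys_def lin_sum lin_single by (simp add: lin_def)

lemma lin_cat: "lin q e (cat f g) =
  (\<Sum>v\<in>kys f. \<Sum>v'\<in>kys g. evC q (lk f v) * evC q (lk g v') * e (v @ v'))"
  unfolding cat_def lin_sum by simp

lemma lin_sh: "lin q e (sh f g) =
  (\<Sum>v\<in>kys f. \<Sum>v'\<in>kys g. evC q (lk f v) * evC q (lk g v') * lin q e (shw v v'))"
  unfolding sh_def lin_sum by (simp add: lin_scal)

lemma lin_sum_fun: "lin q (\<lambda>w. \<Sum>i\<in>I. e i w) h = (\<Sum>i\<in>I. lin q (e i) h)"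
  unfolding lin_def by (simp add: sum_distrib_left sum.swap[of _ I])

lemma lin_mult_fun: "lin q (\<lambda>w. c * e w) h = c * lin q e h"
  unfolding lin_def by (simp add: sum_distrib_left algebra_simps)


section \<open>Block words\<close>

definition enc :: "nat list \<Rightarrow> word" where
  "enc ks = concat (map (\<lambda>k. Lb # replicate k La) ks)"

lemma enc_Nil [simp]: "enc [] = []" by (simp add: enc_def)
lemma enc_Cons: "enc (k # ks) = Lb # replicate k La @ enc ks" by (simp add: enc_def)
lemma enc_append: "enc (ks @ ks') = enc ks @ enc ks'" by (simp add: enc_def)
lemma enc_snoc: "enc (ks @ [k]) = enc ks @ Lb # replicate k La" by (simp add: enc_def)

lemma enc_hd: "enc ks = [] \<or> hd (enc ks) = Lb"
  by (cases ks) (auto simp: enc_Cons)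

lemma takeWhile_enc: "takeWhile (\<lambda>c. c = La) (enc ks) = []"
  using enc_hd[of ks] by (cases "enc ks") auto

lemma dropWhile_enc: "dropWhile (\<lambda>c. c = La) (enc ks) = enc ks"
  using enc_hd[of ks] by (cases "enc ks") auto

lemma blocks_enc [simp]: "blocks (enc ks) = Some ks"
proof (induction ks)
  case Nil then show ?case by simp
next
  case (Cons k ks)
  have t: "takeWhile (\<lambda>c. c = La) (replicate k La @ enc ks) = replicate k La"
    by (subst takeWhile_append2) (auto simp: takeWhile_enc)
  have d: "dropWhile (\<lambda>c. c = La) (replicate k La @ enc ks) = enc ks"
    by (subst dropWhile_append2) (auto simp: dropWhile_enc)
  show ?case by (simp add: enc_Cons t d Cons.IH)
qed

lemma enc_inj: "enc ks = enc ks' \<Longrightarrow> ks = ks'"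
  by (metis blocks_enc option.inject)

lemma blocks_Some: "blocks w = Some ks \<Longrightarrow> w = enc ks"
proof (induction w arbitrary: ks rule: blocks.induct)
  case 1 then show ?case by simp
next
  case (2 w) then show ?case by simp
next
  case (3 w)
  then obtain ks' where ks': "blocks (dropWhile (\<lambda>c. c = La) w) = Some ks'"
    "ks = length (takeWhile (\<lambda>c. c = La) w) # ks'" by auto
  have "takeWhile (\<lambda>c. c = La) w = replicate (length (takeWhile (\<lambda>c. c = La) w)) La"
    by (metis (mono_tags, lifting) replicate_length_same set_takeWhileD)
  then have "w = replicate (length (takeWhile (\<lambda>c. c = La) w)) La @ dropWhile (\<lambda>c. c = La) w"
    by (metis takeWhile_dropWhile_id)
  then show ?case using 3(1)[OF ks'(1)] ks'(2) by (simp add: enc_Cons)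
qed

lemma word_cases: "(\<exists>ks. w = enc ks) \<or> (\<exists>w'. w = La # w')"
proof (induction "length w" arbitrary: w rule: less_induct)
  case less
  show ?case
  proof (cases w)
    case Nil then show ?thesis by (auto intro: exI[of _ "[]"])
  next
    case (Cons c w')
    show ?thesis
    proof (cases c)
      case La then show ?thesis using Cons by auto
    next
      case Lb
      define t where "t = takeWhile (\<lambda>c. c = La) w'"
      define d where "d = dropWhile (\<lambda>c. c = La) w'"
      have w': "w' = replicate (length t) La @ d"
        unfolding t_def d_def
        by (metis (mono_tags, lifting) replicate_length_same set_takeWhileD takeWhile_dropWhile_id)
      have "length d < length w" using Cons by (simp add: d_def length_dropWhile_le le_imp_less_Suc)
      moreover have "\<not> (\<exists>w''. d = La # w'')"
      proof
        assume "\<exists>w''. d = La # w''"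
        then obtain w'' where "d = La # w''" by blast
        then have "d \<noteq> []" "hd d = La" by auto
        with hd_dropWhile[of "\<lambda>c. c = La" w'] show False unfolding d_def by auto
      qed
      ultimately obtain ks where "d = enc ks" using less by blast
      then have "w = enc (length t # ks)" using Cons Lb w' by (simp add: enc_Cons)
      then show ?thesis by blast
    qed
  qed
qed

lemma enc_char: "(\<exists>ks. w = enc ks) \<longleftrightarrow> (w = [] \<or> hd w = Lb)"
proof
  assume "\<exists>ks. w = enc ks"
  then show "w = [] \<or> hd w = Lb" using enc_hd by auto
next
  assume a: "w = [] \<or> hd w = Lb"
  show "\<exists>ks. w = enc ks"
  proof (cases "\<exists>w'. w = La # w'")
    case True then show ?thesis using a by auto
  next
    case False then show ?thesis using word_cases[of w] by blast
  qed
qed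

definition valid :: "word \<Rightarrow> bool" where
  "valid x \<longleftrightarrow> x = [] \<or> last x = Lb"

lemma valid_enc: "valid x \<longleftrightarrow> (\<exists>ks. rev x = enc ks)"
  unfolding valid_def enc_char by (cases x rule: rev_cases) auto

lemma valid_Nil [simp]: "valid []" by (simp add: valid_def)
lemma valid_Lb: "valid (Lb # x) \<longleftrightarrow> valid x" by (simp add: valid_def)
lemma valid_La: "valid (La # x) \<longleftrightarrow> x \<noteq> [] \<and> valid x" by (simp add: valid_def)

definition phi :: "complex \<Rightarrow> nat \<Rightarrow> complex" where
  "phi q m = q ^ m / qint q m"

lemma phi_0 [simp]: "phi q 0 = 0" by (simp add: phi_def qint_def)

fun frs :: "complex \<Rightarrow> (nat \<Rightarrow> complex) \<Rightarrow> word \<Rightarrow> nat \<Rightarrow> complex" where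
  "frs q g [] m = g m"
| "frs q g (Lb # x) m = (\<Sum>m'<m. frs q g x m')"
| "frs q g (La # x) m = phi q m * frs q g x m"

definition d0 :: "nat \<Rightarrow> complex" where "d0 m = (if m = 0 then 1 else 0)"

abbreviation fr :: "complex \<Rightarrow> word \<Rightarrow> nat \<Rightarrow> complex" where "fr q \<equiv> frs q d0"

lemma frs_append: "frs q g (x @ y) = frs q (frs q g y) x"
proof (induction x)
  case Nil then show ?case by (simp add: fun_eq_iff)
next
  case (Cons c x) then show ?case by (cases c) (simp_all add: fun_eq_iff)
qed

lemma frs_lin: "frs q (\<lambda>k. \<Sum>i\<in>I. c i * h i k) x m = (\<Sum>i\<in>I. c i * frs q (h i) x m)"
proof (induction x arbitrary: m)
  case Nil then show ?case by simp
next
  case (Cons a x) then show ?case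
    by (cases a) (simp_all add: sum_distrib_left sum.swap[of _ "{..<m}"] algebra_simps)
qed

lemma frs_zero: "frs q (\<lambda>_. 0) x m = 0"
proof (induction x arbitrary: m)
  case (Cons a x) then show ?case by (cases a) auto
qed simp

lemma frs_nonempty_0: "x \<noteq> [] \<Longrightarrow> frs q g x 0 = 0"
proof (cases x)
  case (Cons a x') then show ?thesis by (cases a) auto
qed simp

lemma fr_La_end: "fr q (y @ [La]) m = 0"
proof -
  have "frs q d0 [La] = (\<lambda>_. 0)" by (auto simp: fun_eq_iff d0_def)
  then show ?thesis by (simp add: frs_append frs_zero)
qed

lemma G_phi: "G q m k = phi q m ^ k"
proof (cases "k = 0")
  case False
  have "q ^ (k * m) = (q ^ m) ^ k" by (metis power_mult mult.commute)
  then show ?thesis using False by (simp add: G_def phi_def power_divide)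
qed (simp add: G_def)

lemma frs_rep_La: "frs q g (replicate k La @ y) m = phi q m ^ k * frs q g y m"
  by (induction k) auto

definition EndS :: "nat \<Rightarrow> nat \<Rightarrow> nat list set" where
  "EndS r m = {ms. length ms = r \<and> sorted_wrt (<) ms \<and> (\<forall>x\<in>set ms. 0 < x) \<and> lastz ms = m}"

definition ES :: "(nat \<Rightarrow> nat \<Rightarrow> complex) \<Rightarrow> nat \<Rightarrow> nat \<Rightarrow> complex" where
  "ES c r m = (\<Sum>ms\<in>EndS r m. \<Prod>i<r. c i (ms ! i))"

lemma sorted_le_last: "sorted_wrt (<) (ms :: nat list) \<Longrightarrow> x \<in> set ms \<Longrightarrow> x \<le> last ms"
proof (induction ms rule: rev_induct)
  case Nil then show ?case by simp
next
  case (snoc a ms) then show ?case by (auto simp: sorted_wrt_append less_imp_le)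
qed

lemma EndS_bound: "ms \<in> EndS r m \<Longrightarrow> x \<in> set ms \<Longrightarrow> x \<le> m"
  unfolding EndS_def lastz_def using sorted_le_last by (auto split: if_splits)

lemma finite_EndS: "finite (EndS r m)"
proof -
  have "EndS r m \<subseteq> {ms. set ms \<subseteq> {..m} \<and> length ms = r}"
    using EndS_bound by (auto simp: EndS_def)
  then show ?thesis by (rule finite_subset) (intro finite_lists_length_eq, simp)
qed

lemma EndS_0: "EndS 0 m = (if m = 0 then {[]} else {})"
  by (auto simp: EndS_def lastz_def)

lemma EndS_Suc: "EndS (Suc r) m = (\<lambda>ms. ms @ [m]) ` (\<Union>m'<m. EndS r m')"
proof (intro equalityI subsetI)
  fix ms assume ms: "ms \<in> EndS (Suc r) m"
  then have ne: "ms \<noteq> []" by (auto simp: EndS_def)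
  then obtain ms0 a where ms0: "ms = ms0 @ [a]" by (cases ms rule: rev_cases) auto
  have a: "a = m" using ms ms0 by (simp add: EndS_def lastz_def)
  have pos: "0 < a" using ms ms0 by (simp add: EndS_def)
  have s: "sorted_wrt (<) ms0" "\<forall>x\<in>set ms0. x < a" using ms ms0 by (auto simp: EndS_def sorted_wrt_append)
  have "lastz ms0 < m"
    using s pos a by (auto simp: lastz_def)
  then have "ms0 \<in> (\<Union>m'<m. EndS r m')" using ms ms0 s by (auto simp: EndS_def)
  then show "ms \<in> (\<lambda>ms. ms @ [m]) ` (\<Union>m'<m. EndS r m')" using ms0 a by auto
next
  fix ms assume "ms \<in> (\<lambda>ms. ms @ [m]) ` (\<Union>m'<m. EndS r m')"
  then obtain ms0 m' where ms0: "ms = ms0 @ [m]" "ms0 \<in> EndS r m'" "m' < m" by auto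
  have "\<forall>x\<in>set ms0. x < m" using EndS_bound[OF ms0(2)] ms0(3) by fastforce
  then show "ms \<in> EndS (Suc r) m" using ms0 by (auto simp: EndS_def sorted_wrt_append lastz_def)
qed

lemma ES_0: "ES c 0 m = d0 m"
  by (simp add: ES_def EndS_0 d0_def)

lemma ES_cong: "(\<And>i m. i < r \<Longrightarrow> c i m = c' i m) \<Longrightarrow> ES c r m = ES c' r m"
  unfolding ES_def by (intro sum.cong refl prod.cong) auto

lemma sum_UN_EndS: "(\<Sum>ms\<in>(\<Union>m'<m. EndS r m'). f ms) = (\<Sum>m'<m. \<Sum>ms\<in>EndS r m'. f ms)"
  by (rule sum.UNION_disjoint) (simp, simp add: finite_EndS, auto simp: EndS_def)

lemma ES_Suc: "ES c (Suc r) m = c r m * (\<Sum>m'<m. ES c r m')"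
proof -
  have inj: "inj_on (\<lambda>ms. ms @ [m]) A" for A by (auto simp: inj_on_def)
  have "ES c (Suc r) m = (\<Sum>ms\<in>(\<Union>m'<m. EndS r m'). \<Prod>i<Suc r. c i ((ms @ [m]) ! i))"
    unfolding ES_def EndS_Suc by (subst sum.reindex[OF inj]) simp
  also have "\<dots> = (\<Sum>ms\<in>(\<Union>m'<m. EndS r m'). c r m * (\<Prod>i<r. c i (ms ! i)))"
  proof (intro sum.cong refl)
    fix ms assume "ms \<in> (\<Union>m'<m. EndS r m')"
    then have l: "length ms = r" by (auto simp: EndS_def)
    have "(\<Prod>i<r. c i ((ms @ [m]) ! i)) = (\<Prod>i<r. c i (ms ! i))"
      by (intro prod.cong refl) (simp add: nth_append l)
    moreover have "(ms @ [m]) ! r = m" using l[symmetric] by simp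
    ultimately show "(\<Prod>i<Suc r. c i ((ms @ [m]) ! i)) = c r m * (\<Prod>i<r. c i (ms ! i))"
      by (simp only: prod.lessThan_Suc mult.commute)
  qed
  also have "\<dots> = c r m * (\<Sum>m'<m. ES c r m')"
    by (simp add: sum_UN_EndS ES_def sum_distrib_left)
  finally show ?thesis .
qed

lemma incseqs_EndS: "1 \<le> M \<Longrightarrow> incseqs r M = (\<Union>m<M. EndS r m)"
proof (intro equalityI subsetI)
  fix ms assume M: "1 \<le> M" and "ms \<in> incseqs r M"
  then have ms: "length ms = r" "sorted_wrt (<) ms" "set ms \<subseteq> {0<..<M}" by (auto simp: incseqs_def)
  have "lastz ms < M"
  proof (cases "ms = []")
    case False then have "last ms \<in> set ms" by simp
    then have "last ms < M" using ms(3) by auto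
    then show ?thesis using False by (simp add: lastz_def)
  qed (use M in \<open>simp add: lastz_def\<close>)
  then show "ms \<in> (\<Union>m<M. EndS r m)" using ms by (auto simp: EndS_def)
next
  fix ms assume "ms \<in> (\<Union>m<M. EndS r m)"
  then obtain m where m: "m < M" "ms \<in> EndS r m" by auto
  then show "ms \<in> incseqs r M" using EndS_bound[OF m(2)] by (fastforce simp: incseqs_def EndS_def)
qed

lemma fr_enc: "fr q (rev (enc ks)) m = ES (\<lambda>i m. G q m (ks ! i)) (length ks) m"
proof (induction ks arbitrary: m rule: rev_induct)
  case Nil then show ?case by (simp add: ES_0)
next
  case (snoc k ks)
  have "fr q (rev (enc (ks @ [k]))) m = phi q m ^ k * (\<Sum>m'<m. fr q (rev (enc ks)) m')"
    by (simp add: enc_snoc frs_rep_La)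
  also have "\<dots> = G q m k * (\<Sum>m'<m. ES (\<lambda>i m. G q m (ks ! i)) (length ks) m')"
    by (simp add: snoc G_phi)
  also have "\<dots> = G q m k * (\<Sum>m'<m. ES (\<lambda>i m. G q m ((ks @ [k]) ! i)) (length ks) m')"
    by (intro arg_cong2[where f = "(*)"] refl sum.cong ES_cong) (auto simp: nth_append)
  also have "\<dots> = ES (\<lambda>i m. G q m ((ks @ [k]) ! i)) (length (ks @ [k])) m"
    by (simp add: ES_Suc)
  finally show ?case .
qed

lemma Zw_fr: "1 \<le> M \<Longrightarrow> Zw q M w = (\<Sum>m<M. fr q (rev w) m)"
proof (cases "blocks w")
  case None
  then obtain w' where w: "w = La # w'" using word_cases[of w] by force
  show ?thesis using None by (simp add: Zw_def w fr_La_end)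
next
  case (Some ks)
  assume M: "1 \<le> M"
  have w: "w = enc ks" using blocks_Some[OF Some] .
  have "Zw q M w = (\<Sum>ms\<in>(\<Union>m<M. EndS (length ks) m). \<Prod>i<length ks. G q (ms ! i) (ks ! i))"
    using Some by (simp add: Zw_def incseqs_EndS[OF M])
  also have "\<dots> = (\<Sum>m<M. ES (\<lambda>i m. G q m (ks ! i)) (length ks) m)"
    by (simp add: sum_UN_EndS ES_def)
  also have "\<dots> = (\<Sum>m<M. fr q (rev w) m)" by (simp add: w fr_enc)
  finally show ?thesis .
qed


definition conv :: "(nat \<Rightarrow> complex) \<Rightarrow> (nat \<Rightarrow> complex) \<Rightarrow> nat \<Rightarrow> complex" where
  "conv f g p = (\<Sum>i\<le>p. f i * g (p - i))"

definition Tri :: "nat \<Rightarrow> (nat \<times> nat) set" where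
  "Tri p = {(j, n). j + n < p}"

lemma finite_Tri: "finite (Tri p)"
  by (rule finite_subset[of _ "{..<p} \<times> {..<p}"]) (auto simp: Tri_def)

lemma conv_d0_left: "conv d0 g p = g p"
  unfolding conv_def d0_def by (simp add: sum.atMost_shift)

lemma conv_d0_right: "conv f d0 p = f p"
proof -
  have "conv f d0 p = (\<Sum>i\<le>p. if i = p then f i else 0)"
    unfolding conv_def d0_def by (intro sum.cong) auto
  then show ?thesis by simp
qed

lemma sum_conv_Tri: "(\<Sum>p'<p. conv f g p') = (\<Sum>(j, n)\<in>Tri p. f j * g n)"
proof -
  have "(\<Sum>p'<p. conv f g p') = (\<Sum>(p', i)\<in>Sigma {..<p} (\<lambda>p'. {..p'}). f i * g (p' - i))"
    unfolding conv_def by (subst sum.Sigma) auto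
  also have "\<dots> = (\<Sum>(j, n)\<in>Tri p. f j * g n)"
    by (rule sum.reindex_bij_witness[where i = "\<lambda>(j, n). (j + n, j)" and j = "\<lambda>(p', i). (i, p' - i)"])
       (auto simp: Tri_def)
  finally show ?thesis .
qed

lemma conv_S_left: "conv (\<lambda>m. \<Sum>m'<m. f m') g p = (\<Sum>p'<p. conv f g p')"
proof -
  have "conv (\<lambda>m. \<Sum>m'<m. f m') g p = (\<Sum>(i, m')\<in>Sigma {..p} (\<lambda>i. {..<i}). f m' * g (p - i))"
    unfolding conv_def sum_distrib_right by (subst sum.Sigma[symmetric]) auto
  also have "\<dots> = (\<Sum>(j, n)\<in>Tri p. f j * g n)"
    by (rule sum.reindex_bij_witness[where i = "\<lambda>(j, n). (p - n, j)" and j = "\<lambda>(i, m'). (m', p - i)"])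
       (auto simp: Tri_def)
  finally show ?thesis by (simp add: sum_conv_Tri)
qed

lemma conv_S_right: "conv f (\<lambda>m. \<Sum>m'<m. g m') p = (\<Sum>p'<p. conv f g p')"
proof -
  have "conv f (\<lambda>m. \<Sum>m'<m. g m') p = (\<Sum>(i, n)\<in>Sigma {..p} (\<lambda>i. {..<p - i}). f i * g n)"
    unfolding conv_def sum_distrib_left by (subst sum.Sigma[symmetric]) auto
  also have "\<dots> = (\<Sum>(j, n)\<in>Tri p. f j * g n)"
    by (rule sum.reindex_bij_witness[where i = "\<lambda>(j, n). (j, n)" and j = "\<lambda>(i, n). (i, n)"])
       (auto simp: Tri_def)
  finally show ?thesis by (simp add: sum_conv_Tri)
qed

lemma phi_alg:
  fixes a b c :: complex
  assumes "1 - a \<noteq> 0" "1 - b \<noteq> 0" "1 - a * b \<noteq> 0"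
  shows "a * c / (1 - a) * (b * c / (1 - b)) = a * b * c / (1 - a * b) * (a * c / (1 - a) + b * c / (1 - b) + c)"
proof -
  have d: "(1 - a) * (1 - b) \<noteq> 0" using assms by simp
  have "a * c / (1 - a) + b * c / (1 - b) + c = (a * c * (1 - b) + b * c * (1 - a) + c * ((1 - a) * (1 - b))) / ((1 - a) * (1 - b))"
    using assms d by (simp add: add_divide_distrib nonzero_divide_mult_cancel_right nonzero_divide_mult_cancel_left)
  also have "a * c * (1 - b) + b * c * (1 - a) + c * ((1 - a) * (1 - b)) = c * (1 - a * b)"
    by (simp add: algebra_simps)
  finally have "a * c / (1 - a) + b * c / (1 - b) + c = c * (1 - a * b) / ((1 - a) * (1 - b))" .
  then show ?thesis using assms by simp
qed

lemma frs_La_fun: "frs q g (La # x) = (\<lambda>m. phi q m * frs q g x m)" by (simp add: fun_eq_iff)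
lemma frs_Lb_fun: "frs q g (Lb # x) = (\<lambda>m. \<Sum>m'<m. frs q g x m')" by (simp add: fun_eq_iff)

lemma conv_aa_gen:
  fixes ph :: "nat \<Rightarrow> complex" and c :: complex
  assumes "f 0 = 0" "g 0 = 0" and I: "\<And>m n. m \<ge> 1 \<Longrightarrow> n \<ge> 1 \<Longrightarrow> ph m * ph n = ph (m + n) * (ph m + ph n + c)"
  shows "conv (\<lambda>m. ph m * f m) (\<lambda>m. ph m * g m) p =
    ph p * (conv (\<lambda>m. ph m * f m) g p + conv f (\<lambda>m. ph m * g m) p + c * conv f g p)"
proof -
  have "conv (\<lambda>m. ph m * f m) (\<lambda>m. ph m * g m) p =
    (\<Sum>i\<le>p. ph p * (ph i * f i * g (p - i)) + ph p * (f i * (ph (p - i) * g (p - i))) + ph p * (c * (f i * g (p - i))))"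
    unfolding conv_def
  proof (intro sum.cong refl)
    fix i assume i: "i \<in> {..p}"
    show "ph i * f i * (ph (p - i) * g (p - i)) =
      ph p * (ph i * f i * g (p - i)) + ph p * (f i * (ph (p - i) * g (p - i))) + ph p * (c * (f i * g (p - i)))"
    proof (cases "i = 0 \<or> i = p")
      case True then show ?thesis using assms(1,2) by auto
    next
      case False
      then have "i \<ge> 1" "p - i \<ge> 1" using i by auto
      from I[OF this] have E: "ph i * ph (p - i) = ph p * (ph i + ph (p - i) + c)"
        using False i by simp
      have "ph p * (ph i * f i * g (p - i)) + ph p * (f i * (ph (p - i) * g (p - i))) + ph p * (c * (f i * g (p - i)))
        = (f i * g (p - i)) * (ph p * (ph i + ph (p - i) + c))"
        by (simp add: algebra_simps)
      also have "\<dots> = (f i * g (p - i)) * (ph i * ph (p - i))" by (simp only: E)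
      finally show ?thesis by (simp add: algebra_simps)
    qed
  qed
  also have "\<dots> = ph p * (\<Sum>i\<le>p. ph i * f i * g (p - i)) + ph p * (\<Sum>i\<le>p. f i * (ph (p - i) * g (p - i)))
      + ph p * (c * (\<Sum>i\<le>p. f i * g (p - i)))"
    by (simp only: sum.distrib sum_distrib_left)
  finally show ?thesis unfolding conv_def by (simp only: distrib_left)
qed

locale qctx =
  fixes q :: complex
  assumes q0: "0 < norm q" and q1: "norm q < 1"
begin

lemma q_ne1: "q \<noteq> 1" using q1 by auto

lemma qpow_ne1: "m \<ge> 1 \<Longrightarrow> q ^ m \<noteq> 1"
proof
  assume "m \<ge> 1" "q ^ m = 1"
  then have "norm (q ^ m) = 1" by simp
  moreover have "norm (q ^ m) < 1" using q1 `m \<ge> 1`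
    by (simp add: norm_power power_less_one_iff)
  ultimately show False by simp
qed

lemma phi_eq: "m \<ge> 1 \<Longrightarrow> phi q m = q ^ m * (1 - q) / (1 - q ^ m)"
  using q_ne1 by (simp add: phi_def qint_def)

lemma phi_identity:
  assumes "m \<ge> 1" "n \<ge> 1"
  shows "phi q m * phi q n = phi q (m + n) * (phi q m + phi q n + (1 - q))"
proof -
  have a: "1 - q ^ m \<noteq> 0" "1 - q ^ n \<noteq> 0" "1 - q ^ (m + n) \<noteq> 0"
    using qpow_ne1 assms by auto
  have "phi q (m + n) = q ^ m * q ^ n * (1 - q) / (1 - q ^ m * q ^ n)"
    using assms by (simp add: phi_eq power_add)
  then show ?thesis
    using a phi_alg[of "q ^ m" "q ^ n" "1 - q"] unfolding phi_eq[OF assms(1)] phi_eq[OF assms(2)]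
    by (simp add: power_add)
qed

lemma conv_aa:
  assumes "f 0 = 0" "g 0 = 0"
  shows "conv (\<lambda>m. phi q m * f m) (\<lambda>m. phi q m * g m) p =
    phi q p * (conv (\<lambda>m. phi q m * f m) g p + conv f (\<lambda>m. phi q m * g m) p + (1 - q) * conv f g p)"
  using conv_aa_gen[of f g "phi q" "1 - q" p] assms phi_identity by blast

lemma lin_fr_Lb: "lin q (\<lambda>w. fr q w p) (mapkeys (Cons Lb) h) = (\<Sum>m'<p. lin q (\<lambda>w. fr q w m') h)"
  by (simp add: lin_mapkeys lin_sum_fun)

lemma lin_fr_La: "lin q (\<lambda>w. fr q w p) (mapkeys (Cons La) h) = phi q p * lin q (\<lambda>w. fr q w p) h"
  by (simp add: lin_mapkeys lin_mult_fun)

theorem shr_conv: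
  "valid x \<Longrightarrow> valid y \<Longrightarrow> lin q (\<lambda>w. fr q w p) (shr x y) = conv (fr q x) (fr q y) p"
proof (induction x y arbitrary: p rule: shr.induct)
  case (1 y) then show ?case by (simp add: conv_d0_left)
next
  case (2 v va) then show ?case by (simp add: conv_d0_right)
next
  case (3 x v va)
  then have "valid x" by (simp add: valid_Lb)
  then show ?case using 3 by (simp add: lin_fr_Lb conv_S_left)
next
  case (4 x y)
  then have "valid y" by (simp add: valid_Lb)
  then show ?case using 4 by (simp add: lin_fr_Lb conv_S_right)
next
  case (5 x y)
  then have v: "valid x" "valid y" "x \<noteq> []" "y \<noteq> []" by (auto simp: valid_La)
  have "lin q (\<lambda>w. fr q w p) (shr (La # x) (La # y)) =
    phi q p * (conv (fr q (La # x)) (fr q y) p + conv (fr q x) (fr q (La # y)) p + (1 - q) * conv (fr q x) (fr q y) p)"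
    using 5 v by (simp add: lin_fr_La lin_add lin_scal del: frs.simps)
  also have "\<dots> = conv (fr q (La # x)) (fr q (La # y)) p"
    using conv_aa[of "fr q x" "fr q y" p] v by (simp add: frs_nonempty_0 frs_La_fun)
  finally show ?case .
qed

end


section \<open>Characterisation of C<A>\<close>

definition zcount :: "nat list \<Rightarrow> nat" where
  "zcount ks = length (filter (\<lambda>k. k = 0) ks)"

lemma zcount_append [simp]: "zcount (ks @ ks') = zcount ks + zcount ks'"
  by (simp add: zcount_def)
lemma zcount_Nil [simp]: "zcount [] = 0" by (simp add: zcount_def)
lemma zcount_Cons: "zcount (k # ks) = (if k = 0 then 1 else 0) + zcount ks"
  by (simp add: zcount_def)

definition CAchar :: "H \<Rightarrow> bool" where
  "CAchar h \<longleftrightarrow> (\<forall>w. lk h w \<noteq> 0 \<longrightarrow> (\<exists>ks. w = enc ks)) \<and> (\<forall>ks. hbar ^ zcount ks dvd lk h (enc ks))"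

lemma CAchar_add: "CAchar f \<Longrightarrow> CAchar g \<Longrightarrow> CAchar (f + g)"
  unfolding CAchar_def by (auto simp: lookup_add) (metis add.right_neutral)

lemma CAchar_scal: "CAchar f \<Longrightarrow> CAchar (scal c f)"
  unfolding CAchar_def by auto

lemma CAchar_zero: "CAchar 0"
  unfolding CAchar_def by auto

lemma CAchar_single: "CAchar (Poly_Mapping.single (enc ks) (hbar ^ zcount ks))"
  unfolding CAchar_def by (auto simp: lookup_single_if dest: enc_inj)

lemma cat_single: "cat (Poly_Mapping.single v a) (Poly_Mapping.single v' b) = Poly_Mapping.single (v @ v') (a * b)"
  unfolding cat_def by auto

lemma scal_single: "scal c (Poly_Mapping.single v a) = Poly_Mapping.single v (c * a)"
  by (rule poly_mapping_eqI) (simp add: lookup_single_if)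

lemma oneH_enc: "oneH = Poly_Mapping.single (enc []) (hbar ^ zcount [])"
  by (simp add: oneH_def)

lemma hb_enc: "hb = Poly_Mapping.single (enc [0]) (hbar ^ zcount [0])"
  by (simp add: hb_def enc_def zcount_def)

lemma gen_enc: "k \<ge> 1 \<Longrightarrow> gen k = Poly_Mapping.single (enc [k]) (hbar ^ zcount [k])"
  by (simp add: gen_def enc_def zcount_def)

lemma CAchar_cat:
  assumes f: "CAchar f" and g: "CAchar g"
  shows "CAchar (cat f g)"
  unfolding CAchar_def
proof (intro conjI allI impI)
  fix w assume "lk (cat f g) w \<noteq> 0"
  then obtain v v' where vv: "v \<in> kys f" "v' \<in> kys g" "v @ v' = w" "lk f v * lk g v' \<noteq> 0"
    unfolding lookup_cat by (smt (verit, ccfv_threshold) sum.neutral)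
  have "\<exists>ks. v = enc ks" "\<exists>ks. v' = enc ks" using f g vv(4) unfolding CAchar_def by auto
  then obtain ks1 ks2 where "v = enc ks1" "v' = enc ks2" by blast
  then show "\<exists>ks. w = enc ks" using vv by (auto simp: enc_append[symmetric])
next
  fix ks
  show "hbar ^ zcount ks dvd lk (cat f g) (enc ks)"
    unfolding lookup_cat
  proof (intro dvd_sum)
    fix v v' assume "v \<in> kys f" "v' \<in> kys g"
    show "hbar ^ zcount ks dvd (if v @ v' = enc ks then lk f v * lk g v' else 0)"
    proof (cases "v @ v' = enc ks \<and> lk f v \<noteq> 0 \<and> lk g v' \<noteq> 0")
      case True
      have "\<exists>ks. v = enc ks" "\<exists>ks. v' = enc ks" using f g True unfolding CAchar_def by auto
      then obtain ks1 ks2 where k: "v = enc ks1" "v' = enc ks2" by blast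
      then have "ks = ks1 @ ks2" using True by (auto simp: enc_append[symmetric] dest: enc_inj)
      then have "hbar ^ zcount ks = hbar ^ zcount ks1 * hbar ^ zcount ks2" by (simp add: power_add)
      moreover have "hbar ^ zcount ks1 dvd lk f v" "hbar ^ zcount ks2 dvd lk g v'"
        using f g k unfolding CAchar_def by auto
      ultimately show ?thesis using True by (simp add: mult_dvd_mono)
    qed auto
  qed
qed

lemma CA_imp_CAchar: "h \<in> CA \<Longrightarrow> CAchar h"
proof (induction rule: CA.induct)
  case CA_one then show ?case by (simp only: oneH_enc CAchar_single)
next
  case (CA_gen a)
  then have "a = hb \<or> (\<exists>k. a = gen k \<and> k \<ge> 1)" by (auto simp: Aset_def)
  then show ?case by (metis CAchar_single hb_enc gen_enc)
next
  case (CA_add f g) then show ?case by (intro CAchar_add) simp_all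
next
  case (CA_scal f c) then show ?case by (intro CAchar_scal) simp
next
  case (CA_mult f g) then show ?case by (intro CAchar_cat) simp_all
qed

lemma CA_zero: "0 \<in> CA"
  using CA_scal[OF CA_one, of 0] by simp

lemma CA_sum: "(\<And>i. i \<in> I \<Longrightarrow> f i \<in> CA) \<Longrightarrow> (\<Sum>i\<in>I. f i) \<in> CA"
  by (induction I rule: infinite_finite_induct) (auto simp: CA_zero intro: CA_add)

lemma pm_sum_single: "h = (\<Sum>w\<in>kys h. Poly_Mapping.single w (lk h w))"
  by (rule poly_mapping_eqI) (simp add: lookup_sum lookup_single_if in_keys_iff)

lemma blk_CA: "Poly_Mapping.single (enc [k]) (hbar ^ zcount [k]) \<in> CA"
proof (cases "k = 0")
  case True then show ?thesis using CA_gen[of hb] hb_enc by (simp add: Aset_def)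
next
  case False
  have "gen k \<in> CA" by (rule CA_gen) (use False in \<open>auto simp: Aset_def\<close>)
  then show ?thesis using gen_enc[of k] False by simp
qed

lemma single_enc_CA: "Poly_Mapping.single (enc ks) (hbar ^ zcount ks) \<in> CA"
proof (induction ks)
  case Nil then show ?case using CA_one oneH_enc by simp
next
  case (Cons k ks)
  have "Poly_Mapping.single (enc (k # ks)) (hbar ^ zcount (k # ks)) =
     cat (Poly_Mapping.single (enc [k]) (hbar ^ zcount [k])) (Poly_Mapping.single (enc ks) (hbar ^ zcount ks))"
    by (simp add: cat_single enc_append[symmetric] power_add zcount_Cons)
  then show ?case using CA_mult[OF blk_CA Cons.IH] by simp
qed

lemma CAchar_imp_CA: "CAchar h \<Longrightarrow> h \<in> CA"
proof -
  assume h: "CAchar h"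
  have "Poly_Mapping.single w (lk h w) \<in> CA" if w: "w \<in> kys h" for w
  proof -
    obtain ks where ks: "w = enc ks" using h w unfolding CAchar_def by (auto simp: in_keys_iff)
    obtain c where c: "lk h w = hbar ^ zcount ks * c" using h ks unfolding CAchar_def by (metis dvdE)
    have "Poly_Mapping.single w (lk h w) = scal c (Poly_Mapping.single (enc ks) (hbar ^ zcount ks))"
      using c ks by (simp add: scal_single mult.commute)
    then show ?thesis using CA_scal[OF single_enc_CA] by simp
  qed
  then have "(\<Sum>w\<in>kys h. Poly_Mapping.single w (lk h w)) \<in> CA" by (intro CA_sum)
  then show ?thesis using pm_sum_single[of h] by simp
qed

section \<open>Shuffle and hbar-divisibility\<close>

fun zr :: "word \<Rightarrow> nat" where
  "zr [] = 0"
| "zr (Lb # x) = Suc (zr x)"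
| "zr [La] = 0"
| "zr (La # La # x) = zr (La # x)"
| "zr (La # Lb # x) = zr x"

lemma zr_rep: "zr (replicate (Suc k) La @ Lb # y) = zr y"
  by (induction k) auto

lemma zr_enc: "zr (rev (enc ks)) = zcount ks"
proof (induction ks rule: rev_induct)
  case Nil then show ?case by simp
next
  case (snoc k ks)
  show ?case
  proof (cases k)
    case 0 then show ?thesis using snoc by (simp add: enc_snoc zcount_def)
  next
    case (Suc k')
    then have "rev (enc (ks @ [k])) = replicate (Suc k') La @ Lb # rev (enc ks)"
      by (simp add: enc_snoc replicate_append_same)
    then show ?thesis using snoc Suc by (simp only: zr_rep) (simp add: zcount_def)
  qed
qed

definition dLb :: "word \<Rightarrow> bool" where "dLb x \<longleftrightarrow> x \<noteq> [] \<and> hd x = Lb"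

lemma zr_La: "zr (La # w) + (if dLb w then 1 else 0) = zr w"
proof (cases w)
  case (Cons c w') then show ?thesis by (cases c) (auto simp: dLb_def)
qed (simp add: dLb_def)

lemma lk_mapkeys_Cons_nz: "lk (mapkeys (Cons c) h) u \<noteq> 0 \<Longrightarrow> \<exists>w. u = c # w \<and> lk h w \<noteq> 0"
  by (auto simp: lookup_mapkeys_Cons split: list.splits if_splits)

lemma shr_Lb_start: "dLb x \<or> dLb y \<Longrightarrow> lk (shr x y) u \<noteq> 0 \<Longrightarrow> dLb u"
proof (induction x y rule: shr.induct)
  case (1 y) then show ?case by (auto simp: lookup_single_if dLb_def split: if_splits)
next
  case (2 v va) then show ?case by (auto simp: lookup_single_if dLb_def split: if_splits)
next
  case (3 x v va) then show ?case by (auto simp: dLb_def dest!: lk_mapkeys_Cons_nz)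
next
  case (4 x y) then show ?case by (auto simp: dLb_def dest!: lk_mapkeys_Cons_nz)
next
  case (5 x y) then show ?case by (auto simp: dLb_def)
qed

lemma shr_nonempty: "x \<noteq> [] \<or> y \<noteq> [] \<Longrightarrow> lk (shr x y) u \<noteq> 0 \<Longrightarrow> u \<noteq> []"
proof (induction x y rule: shr.induct)
  case (1 y) then show ?case by (auto simp: lookup_single_if split: if_splits)
next
  case (2 v va) then show ?case by (auto simp: lookup_single_if split: if_splits)
qed (auto dest!: lk_mapkeys_Cons_nz)

lemma shr_La_start: "x = [] \<or> hd x = La \<Longrightarrow> y = [] \<or> hd y = La \<Longrightarrow> lk (shr x y) u \<noteq> 0 \<Longrightarrow> u = [] \<or> hd u = La"
proof (induction x y rule: shr.induct)
  case (1 y) then show ?case by (auto simp: lookup_single_if split: if_splits)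
next
  case (2 v va) then show ?case by (auto simp: lookup_single_if split: if_splits)
next
  case (5 x y) then show ?case by (auto dest!: lk_mapkeys_Cons_nz)
qed auto

lemma shr_valid: "valid x \<Longrightarrow> valid y \<Longrightarrow> lk (shr x y) u \<noteq> 0 \<Longrightarrow> valid u"
proof (induction x y arbitrary: u rule: shr.induct)
  case (1 y) then show ?case by (auto simp: lookup_single_if split: if_splits)
next
  case (2 v va) then show ?case by (auto simp: lookup_single_if split: if_splits)
next
  case (3 x v va)
  from 3(4) obtain w where w: "u = Lb # w" "lk (shr x (v # va)) w \<noteq> 0"
    by (auto dest!: lk_mapkeys_Cons_nz)
  have "valid x" using 3(2) by (simp add: valid_Lb)
  then have "valid w" using 3(1)[OF _ 3(3) w(2)] by simp
  then show ?case using w by (simp add: valid_Lb)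
next
  case (4 x y)
  from 4(4) obtain w where w: "u = Lb # w" "lk (shr (La # x) y) w \<noteq> 0"
    by (auto dest!: lk_mapkeys_Cons_nz)
  have "valid y" using 4(3) by (simp add: valid_Lb)
  then have "valid w" using 4(1)[OF 4(2) _ w(2)] by simp
  then show ?case using w by (simp add: valid_Lb)
next
  case (5 x y)
  from 5(6) obtain w where w: "u = La # w" and nz: "lk (shr (La # x) y + shr x (La # y) + scal hbar (shr x y)) w \<noteq> 0"
    by (auto dest!: lk_mapkeys_Cons_nz)
  have v: "valid x" "valid y" "x \<noteq> []" using 5(4,5) by (auto simp: valid_La)
  have "lk (shr (La # x) y) w \<noteq> 0 \<or> lk (shr x (La # y)) w \<noteq> 0 \<or> lk (shr x y) w \<noteq> 0"
    using nz by (auto simp: lookup_add)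
  then have "valid w \<and> w \<noteq> []"
  proof (elim disjE)
    assume a: "lk (shr (La # x) y) w \<noteq> 0"
    show ?thesis using 5(1)[OF 5(4) v(2) a] shr_nonempty[OF _ a] by simp
  next
    assume a: "lk (shr x (La # y)) w \<noteq> 0"
    show ?thesis using 5(2)[OF v(1) 5(5) a] shr_nonempty[OF _ a] by simp
  next
    assume a: "lk (shr x y) w \<noteq> 0"
    show ?thesis using 5(3)[OF v(1) v(2) a] shr_nonempty[OF _ a] v(3) by simp
  qed
  then show ?case using w by (simp add: valid_La)
qed

lemma hdvd:
  assumes "hbar ^ a dvd hbar ^ b * c" "a' + b \<le> a + b'"
  shows "hbar ^ a' dvd hbar ^ b' * c"
proof -
  have hz: "hbar ^ b \<noteq> 0" by (simp add: hbar_def)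
  have "hbar ^ (a + b') dvd hbar ^ b * (hbar ^ b' * c)"
    using mult_dvd_mono[OF dvd_refl[of "hbar ^ b'"] assms(1)] by (simp add: power_add algebra_simps)
  moreover have "hbar ^ (a' + b) dvd hbar ^ (a + b')" using assms(2) by (simp add: le_imp_power_dvd)
  ultimately have "hbar ^ b * hbar ^ a' dvd hbar ^ b * (hbar ^ b' * c)"
    by (metis dvd_trans power_add mult.commute)
  then show ?thesis using dvd_mult_cancel_left[of "hbar ^ b" "hbar ^ a'" "hbar ^ b' * c"] hz by blast
qed


lemma shr_div: "hbar ^ zr u dvd hbar ^ (zr x + zr y) * lk (shr x y) u"
proof (induction x y arbitrary: u rule: shr.induct)
  case (1 y) then show ?case by (auto simp: lookup_single_if)
next
  case (2 v va) then show ?case by (auto simp: lookup_single_if)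
next
  case (3 x v va)
  show ?case
  proof (cases "\<exists>w. u = Lb # w")
    case True
    then obtain w where w: "u = Lb # w" by blast
    have "hbar ^ zr w dvd hbar ^ (zr x + zr (v # va)) * lk (shr x (v # va)) w" by (rule 3)
    then have "hbar ^ Suc (zr w) dvd hbar ^ (Suc (zr x) + zr (v # va)) * lk (shr x (v # va)) w"
      by (rule hdvd) simp
    then show ?thesis using w by (simp add: lookup_mapkeys_Cons)
  next
    case False then have "lk (mapkeys (Cons Lb) h) u = 0" for h
      by (auto simp: lookup_mapkeys_Cons split: list.splits)
    then show ?thesis by simp
  qed
next
  case (4 x y)
  show ?case
  proof (cases "\<exists>w. u = Lb # w")
    case True
    then obtain w where w: "u = Lb # w" by blast
    have "hbar ^ zr w dvd hbar ^ (zr (La # x) + zr y) * lk (shr (La # x) y) w" by (rule 4)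
    then have "hbar ^ Suc (zr w) dvd hbar ^ (zr (La # x) + Suc (zr y)) * lk (shr (La # x) y) w"
      by (rule hdvd) simp
    then show ?thesis using w by (simp add: lookup_mapkeys_Cons)
  next
    case False then have "lk (mapkeys (Cons Lb) h) u = 0" for h
      by (auto simp: lookup_mapkeys_Cons split: list.splits)
    then show ?thesis by simp
  qed
next
  case (5 x y)
  show ?case
  proof (cases "\<exists>w. u = La # w")
    case False then have "lk (mapkeys (Cons La) h) u = 0" for h
      by (auto simp: lookup_mapkeys_Cons split: list.splits)
    then show ?thesis by simp
  next
    case True
    then obtain w where w: "u = La # w" by blast
    define B where "B = zr (La # x) + zr (La # y)"
    define c1 where "c1 = lk (shr (La # x) y) w"
    define c2 where "c2 = lk (shr x (La # y)) w"
    define c3 where "c3 = lk (shr x y) w"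
    have lk: "lk (shr (La # x) (La # y)) u = c1 + c2 + hbar * c3"
      using w by (simp add: lookup_mapkeys_Cons lookup_add c1_def c2_def c3_def)
    have ew: "zr (La # w) + (if dLb w then 1 else 0) = zr w" by (rule zr_La)
    have ex: "zr (La # x) + (if dLb x then 1 else 0) = zr x" by (rule zr_La)
    have ey: "zr (La # y) + (if dLb y then 1 else 0) = zr y" by (rule zr_La)
    have t1: "hbar ^ zr (La # w) dvd hbar ^ B * c1"
    proof (cases "c1 = 0")
      case False
      then have imp: "dLb y \<longrightarrow> dLb w" using shr_Lb_start[of "La # x" y w] by (auto simp: c1_def)
      have i: "hbar ^ zr w dvd hbar ^ (zr (La # x) + zr y) * c1" unfolding c1_def by (rule 5)
      show ?thesis unfolding B_def by (rule hdvd[OF i]) (use imp ew ey in \<open>auto split: if_splits\<close>)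
    qed simp
    have t2: "hbar ^ zr (La # w) dvd hbar ^ B * c2"
    proof (cases "c2 = 0")
      case False
      then have imp: "dLb x \<longrightarrow> dLb w" using shr_Lb_start[of x "La # y" w] by (auto simp: c2_def)
      have i: "hbar ^ zr w dvd hbar ^ (zr x + zr (La # y)) * c2" unfolding c2_def by (rule 5)
      show ?thesis unfolding B_def by (rule hdvd[OF i]) (use imp ew ex in \<open>auto split: if_splits\<close>)
    qed simp
    have t3: "hbar ^ zr (La # w) dvd hbar ^ B * (hbar * c3)"
    proof (cases "c3 = 0")
      case False
      then have imp: "dLb x \<or> dLb y \<longrightarrow> dLb w" using shr_Lb_start[of x y w] by (auto simp: c3_def)
      have i: "hbar ^ zr w dvd hbar ^ (zr x + zr y) * c3" unfolding c3_def by (rule 5)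
      have "hbar ^ zr (La # w) dvd hbar ^ (Suc B) * c3" unfolding B_def
        by (rule hdvd[OF i]) (use imp ew ex ey in \<open>auto split: if_splits\<close>)
      then show ?thesis by (simp add: algebra_simps)
    qed simp
    show ?thesis using t1 t2 t3 lk w unfolding B_def by (simp add: distrib_left dvd_add)
  qed
qed

lemma CAchar_shw: "CAchar (scal (hbar ^ (zcount ks1 + zcount ks2)) (shw (enc ks1) (enc ks2)))"
  unfolding CAchar_def
proof (intro conjI allI impI)
  fix w assume "lk (scal (hbar ^ (zcount ks1 + zcount ks2)) (shw (enc ks1) (enc ks2))) w \<noteq> 0"
  then have "lk (shr (rev (enc ks1)) (rev (enc ks2))) (rev w) \<noteq> 0"
    by (simp add: shw_def lookup_mapkeys_rev)
  then have "valid (rev w)" by (rule shr_valid[rotated 2]) (auto simp: valid_enc)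
  then show "\<exists>ks. w = enc ks" by (simp add: valid_enc)
next
  fix ks
  have "hbar ^ zr (rev (enc ks)) dvd hbar ^ (zr (rev (enc ks1)) + zr (rev (enc ks2))) *
      lk (shr (rev (enc ks1)) (rev (enc ks2))) (rev (enc ks))" by (rule shr_div)
  then show "hbar ^ zcount ks dvd lk (scal (hbar ^ (zcount ks1 + zcount ks2)) (shw (enc ks1) (enc ks2))) (enc ks)"
    by (simp add: shw_def lookup_mapkeys_rev zr_enc)
qed

theorem CA_sh: "f \<in> CA \<Longrightarrow> g \<in> CA \<Longrightarrow> sh f g \<in> CA"
proof -
  assume f: "f \<in> CA" and g: "g \<in> CA"
  have cf: "CAchar f" and cg: "CAchar g" using f g by (auto intro: CA_imp_CAchar)
  have "scal (lk f v * lk g v') (shw v v') \<in> CA" if v: "v \<in> kys f" "v' \<in> kys g" for v v'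
  proof -
    have "\<exists>ks. v = enc ks" "\<exists>ks. v' = enc ks" using cf cg v unfolding CAchar_def by (auto simp: in_keys_iff)
    then obtain ks1 ks2 where k: "v = enc ks1" "v' = enc ks2" by blast
    obtain a b where ab: "lk f v = hbar ^ zcount ks1 * a" "lk g v' = hbar ^ zcount ks2 * b"
      using cf cg k unfolding CAchar_def by (metis dvdE)
    have "scal (lk f v * lk g v') (shw v v') = scal (a * b) (scal (hbar ^ (zcount ks1 + zcount ks2)) (shw (enc ks1) (enc ks2)))"
      unfolding ab by (simp add: scal_scal k power_add algebra_simps)
    then show ?thesis using CA_scal[OF CAchar_imp_CA[OF CAchar_shw]] by simp
  qed
  then show ?thesis unfolding sh_def by (auto intro!: CA_sum)
qed

lemma ex_nz_sum: "(\<Sum>a\<in>A. f a) \<noteq> 0 \<Longrightarrow> \<exists>a\<in>A. f a \<noteq> 0"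
  by (meson sum.neutral)


definition H0char :: "H \<Rightarrow> bool" where
  "H0char h \<longleftrightarrow> CAchar h \<and> (\<forall>w. lk h w \<noteq> 0 \<longrightarrow> w = [] \<or> last w = La)"

lemma H0hat_imp: "h \<in> H0hat \<Longrightarrow> H0char h"
proof (induction rule: H0hat.induct)
  case (H0_const c)
  have "CAchar (scal c oneH)" by (intro CAchar_scal) (simp only: oneH_enc CAchar_single)
  then show ?case unfolding H0char_def by (auto simp: oneH_def lookup_single_if split: if_splits)
next
  case (H0_gk f k)
  have "gen k \<in> CA" by (rule CA_gen) (use H0_gk(2) in \<open>auto simp: Aset_def\<close>)
  then have "cat f (gen k) \<in> CA" using H0_gk(1) by (intro CA_mult)
  moreover have "last w = La" if nzc: "lk (cat f (gen k)) w \<noteq> 0" for w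
  proof -
    obtain v where "v \<in> kys f" "(\<Sum>v'\<in>kys (gen k). if v @ v' = w then lk f v * lk (gen k) v' else 0) \<noteq> 0"
      using ex_nz_sum[OF nzc[unfolded lookup_cat]] by blast
    then obtain v' where "v' \<in> kys (gen k)" "(if v @ v' = w then lk f v * lk (gen k) v' else 0) \<noteq> 0"
      using ex_nz_sum by blast
    then have "v' \<in> kys (gen k)" "v @ v' = w" by (auto split: if_splits)
    then show ?thesis using H0_gk(2) by (auto simp: gen_def split: if_splits)
  qed
  ultimately show ?case unfolding H0char_def by (auto intro: CA_imp_CAchar)
next
  case (H0_add f g)
  have c: "CAchar (f + g)" using H0_add.IH by (auto simp: H0char_def intro: CAchar_add)
  have "w = [] \<or> last w = La" if "lk (f + g) w \<noteq> 0" for w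
  proof -
    have "lk f w \<noteq> 0 \<or> lk g w \<noteq> 0" using that by (auto simp: lookup_add)
    then show ?thesis using H0_add.IH unfolding H0char_def by blast
  qed
  then show ?case using c unfolding H0char_def by blast
qed

lemma H0_zero: "0 \<in> H0hat"
  using H0_const[of 0] by simp

lemma H0_sum: "(\<And>i. i \<in> I \<Longrightarrow> f i \<in> H0hat) \<Longrightarrow> (\<Sum>i\<in>I. f i) \<in> H0hat"
  by (induction I rule: infinite_finite_induct) (auto simp: H0_zero intro: H0_add)

lemma H0char_imp: "H0char h \<Longrightarrow> h \<in> H0hat"
proof -
  assume h: "H0char h"
  have "Poly_Mapping.single w (lk h w) \<in> H0hat" if w: "w \<in> kys h" for w
  proof (cases "w = []")
    case True
    then have "Poly_Mapping.single w (lk h w) = scal (lk h w) oneH" by (simp add: oneH_def scal_single)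
    then show ?thesis using H0_const by simp
  next
    case False
    obtain ks where ks: "w = enc ks" using h w unfolding H0char_def CAchar_def by (auto simp: in_keys_iff)
    have lst: "last w = La" using h w False unfolding H0char_def by (auto simp: in_keys_iff)
    obtain ks0 k where kk: "ks = ks0 @ [k]" using False ks by (cases ks rule: rev_cases) auto
    have k: "k \<ge> 1" using lst ks kk by (cases k) (auto simp: enc_snoc)
    obtain c where c: "lk h w = hbar ^ zcount ks * c" using h ks unfolding H0char_def CAchar_def by (metis dvdE)
    have "Poly_Mapping.single w (lk h w) = cat (scal c (Poly_Mapping.single (enc ks0) (hbar ^ zcount ks0))) (gen k)"
      using k unfolding c by (simp add: scal_single gen_def cat_single ks kk enc_snoc zcount_def mult.commute)
    then show ?thesis using H0_gk[OF CA_scal[OF single_enc_CA] k] by simp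
  qed
  then have "(\<Sum>w\<in>kys h. Poly_Mapping.single w (lk h w)) \<in> H0hat" by (intro H0_sum)
  then show ?thesis using pm_sum_single[of h] by simp
qed

lemma H0hat_CA: "h \<in> H0hat \<Longrightarrow> h \<in> CA"
  using H0hat_imp CAchar_imp_CA unfolding H0char_def by blast

theorem H0_sh: "f \<in> H0hat \<Longrightarrow> g \<in> H0hat \<Longrightarrow> sh f g \<in> H0hat"
proof -
  assume f: "f \<in> H0hat" and g: "g \<in> H0hat"
  have "CAchar (sh f g)" using CA_sh[OF H0hat_CA[OF f] H0hat_CA[OF g]] by (rule CA_imp_CAchar)
  moreover have "w = [] \<or> last w = La" if nz: "lk (sh f g) w \<noteq> 0" for w
  proof -
    obtain v where v: "v \<in> kys f" "(\<Sum>v'\<in>kys g. lk f v * lk g v' * lk (shw v v') w) \<noteq> 0"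
      using ex_nz_sum[OF nz[unfolded lookup_sh]] by blast
    then obtain v' where "v' \<in> kys g" "lk f v * lk g v' * lk (shw v v') w \<noteq> 0"
      using ex_nz_sum by blast
    then have vv: "v \<in> kys f" "v' \<in> kys g" "lk (shw v v') w \<noteq> 0" using v by auto
    have "v = [] \<or> last v = La" "v' = [] \<or> last v' = La"
      using vv H0hat_imp[OF f] H0hat_imp[OF g] unfolding H0char_def by (auto simp: in_keys_iff)
    then have "rev v = [] \<or> hd (rev v) = La" "rev v' = [] \<or> hd (rev v') = La"
      by (auto simp: hd_rev)
    moreover have "lk (shr (rev v) (rev v')) (rev w) \<noteq> 0" using vv by (simp add: shw_def lookup_mapkeys_rev)
    ultimately have "rev w = [] \<or> hd (rev w) = La" by (rule shr_La_start)
    then show ?thesis by (auto simp: hd_rev)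
  qed
  ultimately show ?thesis by (intro H0char_imp) (simp add: H0char_def)
qed


definition Phi :: "complex \<Rightarrow> H \<Rightarrow> nat \<Rightarrow> complex" where
  "Phi q h m = lin q (\<lambda>w. fr q (rev w) m) h"

definition Tg :: "complex \<Rightarrow> H \<Rightarrow> (nat \<Rightarrow> complex) \<Rightarrow> nat \<Rightarrow> complex" where
  "Tg q h g m = lin q (\<lambda>w. frs q g (rev w) m) h"

lemma Z_Phi: "1 \<le> M \<Longrightarrow> Z q M h = (\<Sum>m<M. Phi q h m)"
proof -
  assume M: "1 \<le> M"
  have "Z q M h = lin q (\<lambda>w. \<Sum>m<M. fr q (rev w) m) h"
    unfolding Z_lin by (intro lin_cong) (simp add: Zw_fr[OF M])
  then show ?thesis by (simp add: lin_sum_fun Phi_def)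
qed

lemma conv_bilin:
  "conv (\<lambda>i. \<Sum>a\<in>A. c a * f a i) (\<lambda>i. \<Sum>b\<in>B. d b * g b i) p =
   (\<Sum>a\<in>A. \<Sum>b\<in>B. c a * d b * conv (f a) (g b) p)"
proof -
  have "conv (\<lambda>i. \<Sum>a\<in>A. c a * f a i) (\<lambda>i. \<Sum>b\<in>B. d b * g b i) p =
     (\<Sum>i\<le>p. \<Sum>a\<in>A. \<Sum>b\<in>B. c a * d b * (f a i * g b (p - i)))"
    unfolding conv_def sum_product by (intro sum.cong refl) (simp add: mult_ac)
  also have "\<dots> = (\<Sum>a\<in>A. \<Sum>b\<in>B. \<Sum>i\<le>p. c a * d b * (f a i * g b (p - i)))"
    by (subst sum.swap, rule sum.cong, rule refl, subst sum.swap, rule refl)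
  also have "\<dots> = (\<Sum>a\<in>A. \<Sum>b\<in>B. c a * d b * conv (f a) (g b) p)"
    unfolding conv_def by (simp add: sum_distrib_left)
  finally show ?thesis .
qed

lemma Phi_def2: "Phi q h = (\<lambda>i. \<Sum>v\<in>kys h. evC q (lk h v) * fr q (rev v) i)"
  by (simp add: Phi_def lin_def fun_eq_iff)

definition keysvalid :: "H \<Rightarrow> bool" where
  "keysvalid h \<longleftrightarrow> (\<forall>v\<in>kys h. valid (rev v))"

lemma CA_keysvalid: "h \<in> CA \<Longrightarrow> keysvalid h"
  unfolding keysvalid_def
proof
  fix v assume h: "h \<in> CA" and v: "v \<in> kys h"
  then obtain ks where "v = enc ks"
    using CA_imp_CAchar[OF h] unfolding CAchar_def in_keys_iff by blast
  then show "valid (rev v)" unfolding valid_enc by auto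
qed

context qctx
begin

lemma Z_sh:
  assumes X: "keysvalid X" and Y: "keysvalid Y" and M: "1 \<le> M"
  shows "Z q M (sh X Y) = (\<Sum>p<M. conv (Phi q X) (Phi q Y) p)"
proof -
  have s: "lin q (Zw q M) (shw v v') = (\<Sum>p<M. conv (fr q (rev v)) (fr q (rev v')) p)"
    if "v \<in> kys X" "v' \<in> kys Y" for v v'
  proof -
    have vv: "valid (rev v)" "valid (rev v')" using that X Y by (auto simp: keysvalid_def)
    have "lin q (Zw q M) (shw v v') = lin q (\<lambda>w. \<Sum>p<M. fr q w p) (shr (rev v) (rev v'))"
      unfolding shw_def lin_mapkeys by (intro lin_cong) (simp add: Zw_fr[OF M])
    also have "\<dots> = (\<Sum>p<M. conv (fr q (rev v)) (fr q (rev v')) p)"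
      by (simp add: lin_sum_fun shr_conv[OF vv])
    finally show ?thesis .
  qed
  have "Z q M (sh X Y) = (\<Sum>v\<in>kys X. \<Sum>v'\<in>kys Y. evC q (lk X v) * evC q (lk Y v') *
      (\<Sum>p<M. conv (fr q (rev v)) (fr q (rev v')) p))"
    unfolding Z_lin lin_sh by (intro sum.cong refl) (simp add: s)
  also have "\<dots> = (\<Sum>p<M. \<Sum>v\<in>kys X. \<Sum>v'\<in>kys Y. evC q (lk X v) * evC q (lk Y v') *
      conv (fr q (rev v)) (fr q (rev v')) p)"
    by (simp add: sum_distrib_left sum.swap[of _ "{..<M}"])
  also have "\<dots> = (\<Sum>p<M. conv (Phi q X) (Phi q Y) p)"
    unfolding Phi_def2 conv_bilin ..
  finally show ?thesis .
qed

lemma Tg_cat: "Tg q (cat f Y) g m = Tg q Y (Tg q f g) m"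
proof -
  have "Tg q (cat f Y) g m = (\<Sum>v\<in>kys f. \<Sum>v'\<in>kys Y. evC q (lk f v) * evC q (lk Y v') *
      frs q (frs q g (rev v)) (rev v') m)"
    unfolding Tg_def lin_cat by (simp add: frs_append)
  also have "\<dots> = (\<Sum>v'\<in>kys Y. evC q (lk Y v') * (\<Sum>v\<in>kys f. evC q (lk f v) * frs q (frs q g (rev v)) (rev v') m))"
    by (subst sum.swap) (simp add: sum_distrib_left algebra_simps)
  also have "\<dots> = Tg q Y (Tg q f g) m"
    unfolding Tg_def lin_def by (simp add: frs_lin)
  finally show ?thesis .
qed

lemma Tg_one: "Tg q oneH g m = g m"
  by (simp add: Tg_def oneH_def)

lemma Fw_enc1: "Fw q m (enc [k]) = G q m k"
  by (simp add: Fw_def)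

lemma Tg_A: "a \<in> Aset \<Longrightarrow> Tg q a g m = F q m a * (\<Sum>m'<m. g m')"
proof -
  assume "a \<in> Aset"
  then have "a = hb \<or> (\<exists>k. a = gen k \<and> k \<ge> 1)" unfolding Aset_def by blast
  then show ?thesis
  proof
    assume a: "a = hb"
    have e: "[Lb] = enc [0]" by (simp add: enc_def)
    have f1: "Fw q m [Lb] = 1" unfolding e Fw_enc1 by (simp add: G_def)
    have "F q m a = (1 - q) * Fw q m [Lb]" by (simp add: F_lin a hb_def)
    also have "\<dots> = 1 - q" by (simp only: f1 mult_1_right)
    finally have F1: "F q m a = 1 - q" .
    have "Tg q a g m = (1 - q) * frs q g [Lb] m" by (simp add: Tg_def a hb_def)
    then show ?thesis by (simp add: F1)
  next
    assume "\<exists>k. a = gen k \<and> k \<ge> 1"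
    then obtain k where a: "a = gen k" by blast
    have e: "Lb # replicate k La = enc [k]" by (simp add: enc_def)
    have f1: "Fw q m (Lb # replicate k La) = G q m k" unfolding e Fw_enc1 ..
    have F1: "F q m a = G q m k" by (simp add: F_lin a gen_def f1)
    have r: "rev (Lb # replicate k La) = replicate k La @ [Lb]" by simp
    have "Tg q a g m = frs q g (rev (Lb # replicate k La)) m" by (simp add: Tg_def a gen_def)
    also have "\<dots> = phi q m ^ k * (\<Sum>m'<m. g m')" by (simp only: r frs_rep_La) simp
    finally show ?thesis by (simp add: F1 G_phi)
  qed
qed

lemma Tg_z: "u \<in> zspace \<Longrightarrow> Tg q u g m = F q m u * (\<Sum>m'<m. g m')"
proof (induction rule: zspace.induct)
  case z_zero then show ?case by (simp add: Tg_def F_lin)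
next
  case (z_step a f c)
  show ?case using z_step Tg_A[OF z_step(1)]
    by (simp add: Tg_def F_lin lin_add lin_scal algebra_simps)
qed

lemma prodH_Cons: "prodH (u # us) = cat u (prodH us)" by (simp add: prodH_def)
lemma prodH_Nil: "prodH [] = oneH" by (simp add: prodH_def)

lemma Tg_prodH_snoc: "Tg q (prodH (us @ [u])) g m = Tg q u (Tg q (prodH us) g) m"
proof (induction us arbitrary: g m)
  case Nil then show ?case
    by (simp add: prodH_Cons prodH_Nil Tg_cat Tg_one fun_eq_iff)
next
  case (Cons u1 us)
  have "Tg q (prodH ((u1 # us) @ [u])) g m = Tg q (prodH (us @ [u])) (Tg q u1 g) m"
    by (simp add: prodH_Cons Tg_cat)
  also have "\<dots> = Tg q u (Tg q (prodH us) (Tg q u1 g)) m" by (rule Cons.IH)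
  also have "\<dots> = Tg q u (Tg q (prodH (u1 # us)) g) m"
  proof -
    have "Tg q (prodH us) (Tg q u1 g) = Tg q (prodH (u1 # us)) g"
      by (simp add: fun_eq_iff prodH_Cons Tg_cat)
    then show ?thesis by simp
  qed
  finally show ?case .
qed

lemma Phi_Tg: "Phi q h = Tg q h d0"
  by (simp add: Phi_def Tg_def fun_eq_iff)

lemma Phi_prodH:
  "set us \<subseteq> zspace \<Longrightarrow> Phi q (prodH us) m = ES (\<lambda>i m. F q m (us ! i)) (length us) m"
proof (induction us arbitrary: m rule: rev_induct)
  case Nil then show ?case by (simp add: Phi_Tg prodH_Nil Tg_one ES_0)
next
  case (snoc u us)
  have "Phi q (prodH (us @ [u])) m = Tg q u (Tg q (prodH us) d0) m"
    by (simp add: Phi_Tg Tg_prodH_snoc)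
  also have "\<dots> = F q m u * (\<Sum>m'<m. Tg q (prodH us) d0 m')"
    using snoc.prems by (intro Tg_z) auto
  also have "\<dots> = F q m u * (\<Sum>m'<m. ES (\<lambda>i m. F q m (us ! i)) (length us) m')"
    using snoc by (simp add: Phi_Tg[symmetric])
  also have "\<dots> = F q m u * (\<Sum>m'<m. ES (\<lambda>i m. F q m ((us @ [u]) ! i)) (length us) m')"
    by (intro arg_cong2[where f = "(*)"] refl sum.cong ES_cong) (auto simp: nth_append)
  also have "\<dots> = ES (\<lambda>i m. F q m ((us @ [u]) ! i)) (length (us @ [u])) m"
    by (simp add: ES_Suc)
  finally show ?case .
qed

lemma zspace_CA: "u \<in> zspace \<Longrightarrow> u \<in> CA"
  by (induction rule: zspace.induct) (auto intro: CA_add CA_scal CA_gen simp: CA_zero)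

lemma prodH_CA: "set us \<subseteq> zspace \<Longrightarrow> prodH us \<in> CA"
  by (induction us) (auto simp: prodH_Cons prodH_Nil intro: CA_one CA_mult zspace_CA)

lemma pairs_eq:
  "{(ms, ns). length ms = r \<and> length ns = s \<and> sorted_wrt (<) ms \<and> sorted_wrt (<) ns
     \<and> (\<forall>x\<in>set ms. 0 < x) \<and> (\<forall>x\<in>set ns. 0 < x) \<and> lastz ms + lastz ns < M}
   = (\<Union>(j, n)\<in>Tri M. EndS r j \<times> EndS s n)"
  by (auto simp: Tri_def EndS_def)

theorem part3:
  assumes "set us \<subseteq> zspace" "set vs \<subseteq> zspace" "1 \<le> M"
  shows "Z q M (sh (prodH us) (prodH vs)) =
            (\<Sum>(ms, ns) \<in> {(ms, ns). length ms = length us \<and> length ns = length vs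
                 \<and> sorted_wrt (<) ms \<and> sorted_wrt (<) ns
                 \<and> (\<forall>x\<in>set ms. 0 < x) \<and> (\<forall>x\<in>set ns. 0 < x)
                 \<and> lastz ms + lastz ns < M}.
               (\<Prod>i<length us. F q (ms ! i) (us ! i)) * (\<Prod>j<length vs. F q (ns ! j) (vs ! j)))"
proof -
  define cu where "cu = (\<lambda>i m. F q m (us ! i))"
  define cv where "cv = (\<lambda>i m. F q m (vs ! i))"
  define hh where "hh = (\<lambda>(ms, ns). (\<Prod>i<length us. cu i (ms ! i)) * (\<Prod>i<length vs. cv i (ns ! i)))"
  define AA where "AA = (\<lambda>x. EndS (length us) (fst x) \<times> EndS (length vs) (snd x))"
  have "Z q M (sh (prodH us) (prodH vs)) = (\<Sum>p<M. conv (Phi q (prodH us)) (Phi q (prodH vs)) p)"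
    using assms by (intro Z_sh CA_keysvalid prodH_CA)
  also have "\<dots> = (\<Sum>(j, n)\<in>Tri M. ES cu (length us) j * ES cv (length vs) n)"
    unfolding sum_conv_Tri using assms by (simp add: Phi_prodH cu_def cv_def)
  also have "\<dots> = (\<Sum>(j, n)\<in>Tri M. \<Sum>(ms, ns)\<in>EndS (length us) j \<times> EndS (length vs) n.
       (\<Prod>i<length us. cu i (ms ! i)) * (\<Prod>i<length vs. cv i (ns ! i)))"
    unfolding ES_def by (simp add: sum_product sum.cartesian_product)
  also have "\<dots> = (\<Sum>x\<in>Tri M. sum hh (AA x))"
    unfolding hh_def AA_def by (simp add: split_def)
  also have "\<dots> = sum hh (\<Union>(AA ` Tri M))"
    by (rule sum.UNION_disjoint[symmetric]) (simp add: finite_Tri, simp add: AA_def finite_EndS, auto simp: AA_def EndS_def)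
  also have "(\<Union>(AA ` Tri M)) = (\<Union>(j, n)\<in>Tri M. EndS (length us) j \<times> EndS (length vs) n)"
    by (auto simp: AA_def)
  finally show ?thesis by (simp only: pairs_eq hh_def cu_def cv_def)
qed

end


lemma summable_poly_geom:
  fixes r :: real
  assumes r0: "0 \<le> r" and r1: "r < 1"
  shows "summable (\<lambda>m. (real m + 1) ^ n * r ^ m)"
proof (cases "r = 0")
  case True
  show ?thesis
    by (rule summable_ratio_test[of 0 0]) (auto simp: True)
next
  case False
  then have rp: "0 < r" using r0 by simp
  define c where "c = (1 + r) / 2"
  have c1: "c < 1" using r1 by (simp add: c_def)
  have L: "(\<lambda>m. (1 + inverse (real (Suc m))) ^ n) \<longlonglongrightarrow> 1"
    using tendsto_power[OF tendsto_add[OF tendsto_const LIMSEQ_inverse_real_of_nat], of 1 n] by simp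
  have "1 < c / r" using rp r1 by (simp add: c_def field_simps)
  then have "eventually (\<lambda>m. (1 + inverse (real (Suc m))) ^ n < c / r) sequentially"
    using order_tendstoD(2)[OF L] by blast
  then obtain N where N: "\<And>m. m \<ge> N \<Longrightarrow> (1 + inverse (real (Suc m))) ^ n < c / r"
    by (auto simp: eventually_sequentially)
  show ?thesis
  proof (rule summable_ratio_test[OF c1])
    fix m assume m: "m \<ge> N"
    have e: "real (Suc m) + 1 = (1 + inverse (real (Suc m))) * (real m + 1)"
      by (simp add: field_simps)
    have "norm ((real (Suc m) + 1) ^ n * r ^ Suc m) = (1 + inverse (real (Suc m))) ^ n * r * ((real m + 1) ^ n * r ^ m)"
      using rp unfolding e by (simp add: power_mult_distrib abs_mult)
    also have "\<dots> \<le> (c / r) * r * ((real m + 1) ^ n * r ^ m)"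
      using N[OF m] rp by (intro mult_right_mono) auto
    also have "\<dots> = c * norm ((real m + 1) ^ n * r ^ m)"
      using rp by simp
    finally show "norm ((real (Suc m) + 1) ^ n * r ^ Suc m) \<le> c * norm ((real m + 1) ^ n * r ^ m)" .
  qed
qed

context qctx
begin

definition Kq :: real where "Kq = 2 / (1 - norm q)"

lemma Kq_ge1: "1 \<le> Kq"
  using q0 q1 by (simp add: Kq_def field_simps)

lemma phi_bound: "norm (phi q m) \<le> Kq * norm q ^ m"
proof (cases "m = 0")
  case True then show ?thesis using Kq_ge1 by simp
next
  case False
  then have m: "m \<ge> 1" by simp
  have n1: "norm (1 - q) \<le> 2"
    using norm_triangle_ineq4[of 1 q] q1 by simp
  have "norm q ^ m \<le> norm q" using m q1 by (simp add: power_le_one power_increasing_iff[symmetric])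
    (metis One_nat_def less_eq_real_def norm_ge_zero power_decreasing power_one_right)
  then have n2: "1 - norm q \<le> norm (1 - q ^ m)"
    using norm_triangle_ineq2[of 1 "q ^ m"] by (simp add: norm_power)
  have pos: "0 < 1 - norm q" using q1 by simp
  have "norm (phi q m) = norm q ^ m * norm (1 - q) / norm (1 - q ^ m)"
    by (simp add: phi_eq[OF m] norm_mult norm_divide norm_power)
  also have "\<dots> \<le> norm q ^ m * 2 / (1 - norm q)"
    using n1 n2 pos by (intro frac_le mult_left_mono) auto
  also have "\<dots> = Kq * norm q ^ m" by (simp add: Kq_def)
  finally show ?thesis .
qed

lemma phi_bound2: "norm (phi q m) \<le> Kq"
proof -
  have "norm q ^ m \<le> 1" using q1 by (simp add: power_le_one)
  then have "Kq * norm q ^ m \<le> Kq" using Kq_ge1 by (simp add: mult_left_le)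
  then show ?thesis using phi_bound[of m] by linarith
qed

lemma fr_bound: "norm (fr q x m) \<le> Kq ^ length x * (real m + 1) ^ length x"
proof (induction x arbitrary: m)
  case Nil then show ?case by (simp add: d0_def)
next
  case (Cons a x)
  let ?n = "length x"
  have K0: "0 \<le> Kq" using Kq_ge1 by simp
  show ?case
  proof (cases a)
    case La
    have "norm (fr q (La # x) m) = norm (phi q m) * norm (fr q x m)" by (simp add: norm_mult)
    also have "\<dots> \<le> Kq * (Kq ^ ?n * (real m + 1) ^ ?n)"
      using phi_bound2 Cons.IH K0 by (intro mult_mono) auto
    also have "\<dots> \<le> Kq * (Kq ^ ?n * (real m + 1) ^ Suc ?n)"
      using K0 by (intro mult_left_mono) (auto intro!: power_increasing)
    finally show ?thesis using La by (simp add: algebra_simps)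
  next
    case Lb
    have "norm (fr q (Lb # x) m) \<le> (\<Sum>m'<m. norm (fr q x m'))" by (simp add: norm_sum)
    also have "\<dots> \<le> (\<Sum>m'<m. Kq ^ ?n * (real m + 1) ^ ?n)"
    proof (intro sum_mono)
      fix m' assume "m' \<in> {..<m}"
      then have "(real m' + 1) ^ ?n \<le> (real m + 1) ^ ?n" by (intro power_mono) auto
      then show "norm (fr q x m') \<le> Kq ^ ?n * (real m + 1) ^ ?n"
        using Cons.IH[of m'] K0 by (meson mult_left_mono order_trans zero_le_power)
    qed
    also have "\<dots> = real m * (Kq ^ ?n * (real m + 1) ^ ?n)" by simp
    also have "\<dots> \<le> (Kq * (real m + 1)) * (Kq ^ ?n * (real m + 1) ^ ?n)"
      using Kq_ge1 K0 by (intro mult_right_mono) (auto intro: order_trans[of _ "real m + 1"] simp: mult_le_cancel_right1)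
    finally show ?thesis using Lb by (simp add: algebra_simps)
  qed
qed

lemma key_bound:
  assumes "w = [] \<or> last w = La"
  shows "norm (fr q (rev w) m) \<le> Kq ^ Suc (length w) * (real m + 1) ^ length w * norm q ^ m"
proof (cases "w = []")
  case True then show ?thesis using Kq_ge1 by (simp add: d0_def)
next
  case False
  then obtain w' where w: "w = w' @ [La]" using assms by (cases w rule: rev_cases) auto
  let ?n = "length w'"
  have K0: "0 \<le> Kq" using Kq_ge1 by simp
  have "norm (fr q (rev w) m) = norm (phi q m) * norm (fr q (rev w') m)" by (simp add: w norm_mult)
  also have "\<dots> \<le> (Kq * norm q ^ m) * (Kq ^ ?n * (real m + 1) ^ ?n)"
    using phi_bound fr_bound[of "rev w'" m] K0 by (intro mult_mono) auto
  also have "\<dots> \<le> (Kq * norm q ^ m) * (Kq ^ Suc ?n * (real m + 1) ^ Suc ?n)"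
  proof (intro mult_left_mono mult_mono)
    show "Kq ^ ?n \<le> Kq ^ Suc ?n" using Kq_ge1 by (intro power_increasing) auto
    show "(real m + 1) ^ ?n \<le> (real m + 1) ^ Suc ?n" by (intro power_increasing) auto
  qed (use K0 in auto)
  finally show ?thesis by (simp add: w algebra_simps)
qed

lemma summable_Phi: "h \<in> H0hat \<Longrightarrow> summable (\<lambda>m. norm (Phi q h m))"
proof -
  assume h: "h \<in> H0hat"
  have kw: "w = [] \<or> last w = La" if "w \<in> kys h" for w
    using H0hat_imp[OF h] that unfolding H0char_def by (auto simp: in_keys_iff)
  define g where "g = (\<lambda>m. \<Sum>w\<in>kys h. norm (evC q (lk h w)) * (Kq ^ Suc (length w) * ((real m + 1) ^ length w * norm q ^ m)))"
  have "summable g"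
    unfolding g_def using q0 q1
    by (intro summable_sum summable_mult summable_poly_geom) auto
  moreover have "norm (norm (Phi q h m)) \<le> g m" for m
  proof -
    have "norm (Phi q h m) \<le> (\<Sum>w\<in>kys h. norm (evC q (lk h w) * fr q (rev w) m))"
      unfolding Phi_def2 by (rule norm_sum)
    also have "\<dots> \<le> g m" unfolding g_def
    proof (intro sum_mono)
      fix w assume "w \<in> kys h"
      then show "norm (evC q (lk h w) * fr q (rev w) m) \<le> norm (evC q (lk h w)) * (Kq ^ Suc (length w) * ((real m + 1) ^ length w * norm q ^ m))"
        using key_bound[OF kw] by (simp add: norm_mult mult_left_mono mult.assoc)
    qed
    finally show ?thesis by simp
  qed
  ultimately show ?thesis by (rule summable_comparison_test'[where N = 0])
qed

lemma Z_tendsto: "h \<in> H0hat \<Longrightarrow> (\<lambda>M. Z q M h) \<longlonglongrightarrow> suminf (Phi q h)"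
proof -
  assume h: "h \<in> H0hat"
  have s: "summable (Phi q h)" using summable_Phi[OF h] summable_norm_cancel by blast
  have "(\<lambda>M. \<Sum>m<M. Phi q h m) \<longlonglongrightarrow> suminf (Phi q h)" using summable_LIMSEQ[OF s] .
  moreover have "eventually (\<lambda>M. (\<Sum>m<M. Phi q h m) = Z q M h) sequentially"
    by (rule eventually_sequentiallyI[of 1]) (simp add: Z_Phi)
  ultimately show ?thesis by (rule Lim_transform_eventually)
qed

lemma Zq_eq: "h \<in> H0hat \<Longrightarrow> Zq q h = suminf (Phi q h)"
  unfolding Zq_def using Z_tendsto by (blast intro: limI)

theorem part4:
  assumes w: "w \<in> H0hat" and w': "w' \<in> H0hat"
  shows "Zq q (sh w w') = Zq q w * Zq q w'"
proof -
  have "(\<lambda>k. \<Sum>i\<le>k. Phi q w i * Phi q w' (k - i)) sums (suminf (Phi q w) * suminf (Phi q w'))"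
    by (rule Cauchy_product_sums[OF summable_Phi[OF w] summable_Phi[OF w']])
  then have "(\<lambda>M. \<Sum>p<M. conv (Phi q w) (Phi q w') p) \<longlonglongrightarrow> suminf (Phi q w) * suminf (Phi q w')"
    by (simp add: sums_def conv_def)
  moreover have "eventually (\<lambda>M. (\<Sum>p<M. conv (Phi q w) (Phi q w') p) = Z q M (sh w w')) sequentially"
    by (rule eventually_sequentiallyI[of 1])
       (simp add: Z_sh CA_keysvalid H0hat_CA w w')
  ultimately have "(\<lambda>M. Z q M (sh w w')) \<longlonglongrightarrow> suminf (Phi q w) * suminf (Phi q w')"
    by (rule Lim_transform_eventually)
  then have "Zq q (sh w w') = suminf (Phi q w) * suminf (Phi q w')"
    unfolding Zq_def by (rule limI)
  then show ?thesis using Zq_eq w w' by simp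
qed

end

theorem proposition3p3:
  fixes q :: complex
  assumes "0 < norm q" and "norm q < 1"
  shows "(\<forall>f g. f \<in> CA \<longrightarrow> g \<in> CA \<longrightarrow> sh f g \<in> CA)
       \<and> (\<forall>f g. f \<in> H0hat \<longrightarrow> g \<in> H0hat \<longrightarrow> sh f g \<in> H0hat)
       \<and> (\<forall>us vs M. set us \<subseteq> zspace \<longrightarrow> set vs \<subseteq> zspace \<longrightarrow> 1 \<le> M \<longrightarrow>
            Z q M (sh (prodH us) (prodH vs)) =
            (\<Sum>(ms, ns) \<in> {(ms, ns). length ms = length us \<and> length ns = length vs
                 \<and> sorted_wrt (<) ms \<and> sorted_wrt (<) ns
                 \<and> (\<forall>x\<in>set ms. 0 < x) \<and> (\<forall>x\<in>set ns. 0 < x)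
                 \<and> lastz ms + lastz ns < M}.
               (\<Prod>i<length us. F q (ms ! i) (us ! i)) * (\<Prod>j<length vs. F q (ns ! j) (vs ! j))))
       \<and> (\<forall>w w'. w \<in> H0hat \<longrightarrow> w' \<in> H0hat \<longrightarrow> Zq q (sh w w') = Zq q w * Zq q w')"
proof -
  interpret qctx q using assms by unfold_locales
  show ?thesis using CA_sh H0_sh part3 part4 by blast
qed


end
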